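(* Let $A\in\mathbb{R}^{n\times n}$ be a range monotone $Z$-matrix with $\mathbb{R}^n_+\cap R(A)\ne\{0\}$. Then the group inverse $A^{\#}$ exists and is a Karamardian matrix.
   Context: A $Z$-matrix is a real square matrix whose off-diagonal entries are nonpositive. A square matrix $M$ is range monotone if $Mx\ge 0$ and $x\in R(M)$ imply $x\ge 0$ (range monotone matrices are group invertible). The group inverse $A^{\#}$ is the unique $X$ with $AXA=A$, $XAX=X$, $AX=XA$; $R(A^{\#})=R(A)$. For $M\in\mathbb{R}^{n\times n}$ let $K_M=\mathbb{R}^n_+\cap R(M)$ and $K_M^*=\{y\in\mathbb{R}^n: x^Ty\ge 0 \text{ for all } x\in K_M\}$ (one has $K_M^*=\mathbb{R}^n_++N(M^T)$, with interior $\{a+b: a>0,\ b\in N(M^T)\}$). For $q\in\mathbb{R}^n$, LCP$(M,K_M,q)$ is to find $x$ with $x\in K_M$, $Mx+q\in K_M^*$, $x^T(Mx+q)=0$. $M$ is a Karamardian matrix if $K_M\ne\{0\}$ and there exists $d$ in the interior of $K_M^*$ such that both LCP$(M,K_M,0)$ and LCP$(M,K_M,d)$ have $x=0$ as their only solution. *)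

theory Defs
  imports "HOL-Analysis.Analysis"
begin

definition nonneg_vec :: "real^'n \<Rightarrow> bool" where
  "nonneg_vec x \<longleftrightarrow> (\<forall>i. 0 \<le> x $ i)"

definition pos_vec :: "real^'n \<Rightarrow> bool" where
  "pos_vec x \<longleftrightarrow> (\<forall>i. 0 < x $ i)"

definition mat_range :: "real^'n^'n \<Rightarrow> (real^'n) set" where
  "mat_range M = range (\<lambda>x. M *v x)"

definition mat_null :: "real^'n^'n \<Rightarrow> (real^'n) set" where
  "mat_null M = {x. M *v x = 0}"

definition Z_matrix :: "real^'n^'n \<Rightarrow> bool" where
  "Z_matrix A \<longleftrightarrow> (\<forall>i j. i \<noteq> j \<longrightarrow> A $ i $ j \<le> 0)"

definition range_monotone :: "real^'n^'n \<Rightarrow> bool" where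
  "range_monotone M \<longleftrightarrow>
     (\<forall>x. nonneg_vec (M *v x) \<and> x \<in> mat_range M \<longrightarrow> nonneg_vec x)"

definition is_group_inverse :: "real^'n^'n \<Rightarrow> real^'n^'n \<Rightarrow> bool" where
  "is_group_inverse A X \<longleftrightarrow> A ** X ** A = A \<and> X ** A ** X = X \<and> A ** X = X ** A"

definition cone_K :: "real^'n^'n \<Rightarrow> (real^'n) set" where
  "cone_K M = {x. nonneg_vec x} \<inter> mat_range M"

definition dual_cone_K :: "real^'n^'n \<Rightarrow> (real^'n) set" where
  "dual_cone_K M = {y. \<forall>x\<in>cone_K M. 0 \<le> x \<bullet> y}"

definition LCP_sol :: "real^'n^'n \<Rightarrow> real^'n \<Rightarrow> (real^'n) set" where
  "LCP_sol M q = {x. x \<in> cone_K M \<and> M *v x + q \<in> dual_cone_K M \<and> x \<bullet> (M *v x + q) = 0}"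

definition karamardian :: "real^'n^'n \<Rightarrow> bool" where
  "karamardian M \<longleftrightarrow> cone_K M \<noteq> {0} \<and>
     (\<exists>d \<in> interior (dual_cone_K M). LCP_sol M 0 = {0} \<and> LCP_sol M d = {0})"

end

theory Submission
  imports Defs
begin

lemma rm_inter:
  fixes A :: "real^'n^'n"
  assumes "range_monotone A" "x \<in> mat_range A" "A *v x = 0"
  shows "x = 0"
proof -
  have "nonneg_vec x" using assms unfolding range_monotone_def nonneg_vec_def by auto
  moreover have "-x \<in> mat_range A"
  proof -
    obtain v where "x = A *v v" using assms(2) unfolding mat_range_def by auto
    then have "-x = A *v (-v)" by (simp add: vec.neg)
    then show ?thesis unfolding mat_range_def by blast
  qed
  then have "nonneg_vec (-x)" using assms unfolding range_monotone_def
    by (metis vec.neg neg_equal_0_iff_equal nonneg_vec_def order_refl zero_index)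
  ultimately show ?thesis unfolding nonneg_vec_def by (simp add: vec_eq_iff) (meson antisym neg_0_le_iff_le)
qed

lemma range_sq:
  fixes A :: "real^'n^'n"
  assumes "range_monotone A"
  shows "range ((*v) A) \<subseteq> range ((*v) (A ** A))"
proof -
  let ?R = "range ((*v) A)"
  have sR: "subspace ?R" by (simp add: subspace_UNIV linear_subspace_image matrix_vector_mul_linear)
  have img: "(*v) A ` ?R = range ((*v) (A ** A))"
    by (auto simp: matrix_vector_mul_assoc image_iff)
  have inj: "inj_on ((*v) A) (span ?R)"
  proof (rule inj_onI)
    fix u v assume u: "u \<in> span ?R" and v: "v \<in> span ?R" and e: "A *v u = A *v v"
    have "span ?R = ?R" using sR by (simp add: span_eq_iff)
    then have "u - v \<in> ?R" using u v sR by (metis subspace_diff)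
    moreover have "A *v (u - v) = 0" using e by (simp add: matrix_vector_mult_diff_distrib)
    ultimately have "u - v = 0" using rm_inter[OF assms] unfolding mat_range_def by blast
    then show "u = v" by simp
  qed
  have "dim ((*v) A ` ?R) = dim ?R" by (rule dim_image_eq[OF matrix_vector_mul_linear inj])
  moreover have "subspace ((*v) A ` ?R)" using sR by (simp add: linear_subspace_image matrix_vector_mul_linear)
  moreover have "(*v) A ` ?R \<subseteq> ?R" by auto
  ultimately have "(*v) A ` ?R = ?R" using sR subspace_dim_equal by (metis order_refl)
  then show ?thesis using img by simp
qed

lemma right_factor:
  fixes A :: "real^'n^'n"
  assumes "range_monotone A"
  shows "\<exists>B. A ** A ** B = A"
proof -
  have h: "A *v axis j 1 \<in> range ((*v) (A ** A))" for j
    by (rule subsetD[OF range_sq[OF assms]]) simp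
  have "\<forall>j. \<exists>w. (A ** A) *v w = A *v axis j 1"
  proof
    fix j show "\<exists>w. (A ** A) *v w = A *v axis j 1" using h[of j] by (metis rangeE)
  qed
  then obtain w where w: "\<And>j. (A ** A) *v w j = A *v axis j 1" by metis
  define B where "B = (\<chi> i j. w j $ i)"
  have "(A ** A ** B) $ i $ j = A $ i $ j" for i j
  proof -
    have "(A ** A ** B) $ i $ j = (\<Sum>k\<in>UNIV. (A ** A) $ i $ k * B $ k $ j)"
      unfolding matrix_matrix_mult_def[of "A ** A" B] by simp
    also have "\<dots> = (\<Sum>k\<in>UNIV. (A ** A) $ i $ k * w j $ k)" by (simp add: B_def)
    also have "\<dots> = ((A ** A) *v w j) $ i"
      unfolding matrix_vector_mult_def[of "A ** A"] by simp
    also have "\<dots> = (A *v axis j 1) $ i" by (simp only: w)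
    also have "\<dots> = A $ i $ j"
      by (simp add: matrix_vector_mult_basis column_def)
    finally show ?thesis .
  qed
  then have "A ** A ** B = A" by (simp add: vec_eq_iff)
  then show ?thesis by blast
qed

lemma zero_lemma:
  fixes A :: "real^'n^'n"
  assumes "range_monotone A" "A ** M = 0" "M = A ** N"
  shows "M = 0"
proof -
  have "M *v v = 0 *v v" for v
  proof -
    have "M *v v \<in> mat_range A" using assms(3) unfolding mat_range_def
      by (simp add: matrix_vector_mul_assoc[symmetric])
    moreover have "A *v (M *v v) = 0" using assms(2) by (simp add: matrix_vector_mul_assoc)
    ultimately show ?thesis using rm_inter[OF assms(1)] by simp
  qed
  then show ?thesis by (simp add: matrix_eq)
qed

lemma matrix_sub_ldistrib:
  fixes A :: "real^'n^'n"
  shows "A ** (B - C) = A ** B - A ** C"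
  by (simp add: matrix_matrix_mult_def vec_eq_iff sum_subtractf algebra_simps)

lemma group_exists:
  fixes A :: "real^'n^'n"
  assumes "range_monotone A"
  shows "\<exists>X. is_group_inverse A X"
proof -
  obtain B where B: "A ** A ** B = A" using right_factor[OF assms] by blast
  have aba: "A ** B ** A = A"
  proof -
    have "A ** B ** A - A = 0"
    proof (rule zero_lemma[OF assms, of _ "B ** A - mat 1"])
      show "A ** (A ** B ** A - A) = 0"
        using B by (simp add: matrix_sub_ldistrib matrix_mul_assoc)
      show "A ** B ** A - A = A ** (B ** A - mat 1)"
        by (simp add: matrix_sub_ldistrib matrix_mul_assoc)
    qed
    then show ?thesis by simp
  qed
  have ab2a: "A ** B ** B ** A = A ** B"
  proof -
    have "A ** B ** B ** A - A ** B = 0"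
    proof (rule zero_lemma[OF assms, of _ "B ** B ** A - B"])
      have "A ** (A ** B ** B ** A) = (A ** A ** B) ** B ** A" by (simp add: matrix_mul_assoc)
      also have "\<dots> = A ** B ** A" using B by simp
      finally show "A ** (A ** B ** B ** A - A ** B) = 0"
        using B aba by (simp add: matrix_sub_ldistrib matrix_mul_assoc)
      show "A ** B ** B ** A - A ** B = A ** (B ** B ** A - B)"
        by (simp add: matrix_sub_ldistrib matrix_mul_assoc)
    qed
    then show ?thesis by simp
  qed
  define X where "X = A ** B ** B"
  have AX: "A ** X = A ** B" unfolding X_def
    using B by (metis matrix_mul_assoc)
  have XA: "X ** A = A ** B" unfolding X_def using ab2a by simp
  have "A ** X ** A = A" using AX aba by simp
  moreover have "X ** A ** X = X"
  proof -
    have "X ** A ** X = A ** B ** A ** B ** B" using XA by (simp add: X_def matrix_mul_assoc)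
    also have "\<dots> = X" using aba by (simp add: X_def)
    finally show ?thesis .
  qed
  ultimately show ?thesis using AX XA unfolding is_group_inverse_def by metis
qed

lemma ginv_range:
  fixes A X :: "real^'n^'n"
  assumes g: "is_group_inverse A X"
  shows "mat_range X = mat_range A"
proof -
  have 1: "A ** X ** A = A" "X ** A ** X = X" "A ** X = X ** A" using g unfolding is_group_inverse_def by auto
  have fx: "X *v v = A *v (X *v (X *v v))" for v
  proof -
    have "X *v v = (X ** A ** X) *v v" using 1 by simp
    also have "\<dots> = (A ** X ** X) *v v" using 1 by simp
    also have "\<dots> = A *v (X *v (X *v v))" by (simp add: matrix_vector_mul_assoc matrix_mul_assoc)
    finally show ?thesis .
  qed
  have fa: "A *v v = X *v (A *v (A *v v))" for v
  proof -
    have "A *v v = (A ** X ** A) *v v" using 1 by simp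
    also have "\<dots> = (X ** A ** A) *v v" using 1 by simp
    also have "\<dots> = X *v (A *v (A *v v))" by (simp add: matrix_vector_mul_assoc matrix_mul_assoc)
    finally show ?thesis .
  qed
  show ?thesis unfolding mat_range_def
  proof (intro subset_antisym subsetI)
    fix u assume "u \<in> range ((*v) X)"
    then obtain v where "u = X *v v" by auto
    then show "u \<in> range ((*v) A)" using fx[of v] by auto
  next
    fix u assume "u \<in> range ((*v) A)"
    then obtain v where "u = A *v v" by auto
    then show "u \<in> range ((*v) X)" using fa[of v] by auto
  qed
qed

lemma ginv_inv:
  fixes A X :: "real^'n^'n"
  assumes g: "is_group_inverse A X" and x: "x \<in> mat_range A"
  shows "A *v (X *v x) = x"
proof -
  obtain v where v: "x = A *v v" using x unfolding mat_range_def by auto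
  have "A ** X ** A = A" using g unfolding is_group_inverse_def by auto
  then show ?thesis using v by (metis matrix_vector_mul_assoc)
qed

lemma nonneg_inner:
  fixes x y :: "real^'n"
  assumes "nonneg_vec x" "nonneg_vec y"
  shows "0 \<le> x \<bullet> y"
  using assms unfolding nonneg_vec_def inner_vec_def by (auto intro: sum_nonneg)

lemma Z_lemma:
  fixes A :: "real^'n^'n"
  assumes Z: "Z_matrix A" and y: "nonneg_vec y" and Ay: "nonneg_vec (A *v y)"
    and e: "(A *v y) \<bullet> y = 0"
  shows "A *v y = 0"
proof -
  have terms: "\<forall>i. (A *v y) $ i * y $ i = 0"
  proof -
    have "(\<Sum>i\<in>UNIV. (A *v y) $ i * y $ i) = 0" using e by (simp add: inner_vec_def)
    moreover have "\<forall>i\<in>UNIV. 0 \<le> (A *v y) $ i * y $ i" using y Ay unfolding nonneg_vec_def by simp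
    ultimately show ?thesis using sum_nonneg_eq_0_iff[of UNIV "\<lambda>i. (A *v y) $ i * y $ i"] by simp
  qed
  have "(A *v y) $ i = 0" for i
  proof (cases "y $ i = 0")
    case True
    have "(A *v y) $ i = (\<Sum>j\<in>UNIV. A $ i $ j * y $ j)" by (simp add: matrix_vector_mult_def)
    also have "\<dots> \<le> 0"
    proof (rule sum_nonpos)
      fix j
      show "A $ i $ j * y $ j \<le> 0"
      proof (cases "j = i")
        case True then show ?thesis using \<open>y $ i = 0\<close> by simp
      next
        case False
        then have "A $ i $ j \<le> 0" using Z unfolding Z_matrix_def by auto
        moreover have "0 \<le> y $ j" using y unfolding nonneg_vec_def by auto
        ultimately show ?thesis by (simp add: mult_nonpos_nonneg)
      qed
    qed
    finally show ?thesis using Ay unfolding nonneg_vec_def by (meson antisym)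
  next
    case False
    then show ?thesis using terms by (metis mult_eq_0_iff)
  qed
  then show ?thesis by (simp add: vec_eq_iff)
qed

theorem mainTheorem10:
  fixes A :: "real^'n^'n"
  assumes "Z_matrix A"
    and "range_monotone A"
    and "{x. nonneg_vec x} \<inter> mat_range A \<noteq> {0}"
  shows "(\<exists>X. is_group_inverse A X) \<and> (\<forall>X. is_group_inverse A X \<longrightarrow> karamardian X)"
proof (intro conjI allI impI)
  show "\<exists>X. is_group_inverse A X" using group_exists[OF assms(2)] .
next
  fix X :: "real^'n^'n"
  assume g: "is_group_inverse A X"
  have RX: "mat_range X = mat_range A" using ginv_range[OF g] .
  have KX: "cone_K X = {x. nonneg_vec x} \<inter> mat_range A" unfolding cone_K_def RX ..
  define d :: "real^'n" where "d = (\<chi> i. 1)"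
  have dual_nonneg: "y \<in> dual_cone_K X" if "nonneg_vec y" for y
    unfolding dual_cone_K_def cone_K_def using nonneg_inner that by auto
  have dint: "d \<in> interior (dual_cone_K X)"
    unfolding mem_interior
  proof (intro exI conjI)
    show "(0::real) < 1/2" by simp
    show "ball d (1/2) \<subseteq> dual_cone_K X"
    proof
      fix z assume z: "z \<in> ball d (1/2)"
      have "nonneg_vec z" unfolding nonneg_vec_def
      proof
        fix i
        have "\<bar>(d - z) $ i\<bar> \<le> norm (d - z)" by (rule component_le_norm_cart)
        also have "\<dots> < 1/2" using z by (simp add: dist_norm)
        finally have "\<bar>1 - z $ i\<bar> < 1/2" by (simp add: d_def)
        then show "0 \<le> z $ i" by linarith
      qed
      then show "z \<in> dual_cone_K X" by (rule dual_nonneg)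
    qed
  qed
  have key: "nonneg_vec (X *v x) \<and> A *v (X *v x) = x \<and> X *v x \<in> mat_range A"
    if x: "x \<in> cone_K X" for x
  proof -
    have xn: "nonneg_vec x" and xr: "x \<in> mat_range A" using x KX by auto
    have xr': "X *v x \<in> mat_range A" using RX unfolding mat_range_def by auto
    have ax: "A *v (X *v x) = x" using ginv_inv[OF g xr] .
    have "nonneg_vec (X *v x)" using assms(2) xr' ax xn unfolding range_monotone_def by auto
    then show ?thesis using ax xr' by simp
  qed
  have zero_in: "0 \<in> LCP_sol X q" if "nonneg_vec q" for q
  proof -
    have "0 \<in> cone_K X" unfolding cone_K_def mat_range_def nonneg_vec_def
      by (auto intro: range_eqI[where x=0])
    then show ?thesis unfolding LCP_sol_def using dual_nonneg[OF that] by simp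
  qed
  have sol0: "LCP_sol X 0 = {0}"
  proof
    show "{0} \<subseteq> LCP_sol X 0" using zero_in[of 0] by (simp add: nonneg_vec_def)
    show "LCP_sol X 0 \<subseteq> {0}"
    proof
      fix x assume "x \<in> LCP_sol X 0"
      then have x: "x \<in> cone_K X" and e: "x \<bullet> (X *v x) = 0" unfolding LCP_sol_def by auto
      define y where "y = X *v x"
      have yn: "nonneg_vec y" and ay: "A *v y = x" and yr: "y \<in> mat_range A"
        using key[OF x] unfolding y_def by auto
      have "(A *v y) \<bullet> y = 0" using e ay unfolding y_def by simp
      moreover have "nonneg_vec (A *v y)" using ay x KX by auto
      ultimately have "A *v y = 0" using Z_lemma[OF assms(1) yn] by simp
      then show "x \<in> {0}" using ay by simp
    qed
  qed
  have sold: "LCP_sol X d = {0}"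
  proof
    show "{0} \<subseteq> LCP_sol X d" using zero_in[of d] by (simp add: nonneg_vec_def d_def)
    show "LCP_sol X d \<subseteq> {0}"
    proof
      fix x assume "x \<in> LCP_sol X d"
      then have x: "x \<in> cone_K X" and e: "x \<bullet> (X *v x + d) = 0" unfolding LCP_sol_def by auto
      have xn: "nonneg_vec x" using x KX by auto
      have "0 \<le> x \<bullet> (X *v x)" using nonneg_inner[OF xn] key[OF x] by simp
      moreover have "0 \<le> x \<bullet> d" using nonneg_inner[OF xn] by (simp add: nonneg_vec_def d_def)
      ultimately have "x \<bullet> d = 0" using e by (simp add: inner_add_right)
      then have "(\<Sum>i\<in>UNIV. x $ i) = 0" by (simp add: inner_vec_def d_def)
      then have "\<forall>i\<in>UNIV. x $ i = 0" using xn sum_nonneg_eq_0_iff[of UNIV "\<lambda>i. x $ i"]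
        unfolding nonneg_vec_def by simp
      then show "x \<in> {0}" by (simp add: vec_eq_iff)
    qed
  qed
  show "karamardian X" unfolding karamardian_def
    using KX assms(3) dint sol0 sold by auto
qed

end
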